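(* For real $p$, the inequalities $$\left( \frac{\sin x}{x}\right) ^{2p}+\left( \frac{\tan x}{x}\right)^{p}>\left( \frac{x}{\sin x}\right) ^{2p}+\left( \frac{x}{\tan x}\right)^{p}>2$$ hold for all $x\in(0,\pi/2)$ if and only if $p\geq \frac{\ln 2}{2(\ln \pi -\ln 2)}$. *)

theory Defs
  imports "HOL-Analysis.Analysis"
begin

end

theory Submission
  imports Defs
begin

lemma sin_bound_gen: "\<bar>sin (x::real) - (\<Sum>m<n. sin_coeff m * x ^ m)\<bar> \<le> \<bar>x\<bar>^n / fact n"
  using Maclaurin_sin_bound[of x n] by (simp add: divide_inverse mult.commute)

lemma cos_bound_gen: "\<bar>cos (x::real) - (\<Sum>m<n. cos_coeff m * x ^ m)\<bar> \<le> \<bar>x\<bar>^n / fact n"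
proof -
  obtain t where t: "cos x = (\<Sum>m<n. cos_coeff m * x ^ m) + (cos(t + 1/2 * real n * pi) / fact n) * x ^ n"
    using Maclaurin_cos_expansion[of x n] by blast
  have "\<bar>cos x - (\<Sum>m<n. cos_coeff m * x ^ m)\<bar> = \<bar>cos(t + 1/2 * real n * pi)\<bar> / fact n * \<bar>x\<bar>^n"
    using t by (simp add: abs_mult power_abs)
  also have "\<dots> \<le> 1 / fact n * \<bar>x\<bar>^n"
    by (intro mult_right_mono divide_right_mono) auto
  finally show ?thesis by simp
qed

lemma sin_ub9: "sin (x::real) \<le> x - x^3/6 + x^5/120 - x^7/5040 + \<bar>x\<bar>^9/362880"
proof -
  have e: "(\<Sum>m<9. sin_coeff m * x ^ m) = x - x^3/6 + x^5/120 - x^7/5040"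
    by (simp add: lessThan_nat_numeral sin_coeff_def fact_numeral)
  have "sin x - (\<Sum>m<9. sin_coeff m * x ^ m) \<le> \<bar>x\<bar>^9 / fact 9"
    using sin_bound_gen[of x 9] by linarith
  then show ?thesis unfolding e by (simp add: fact_numeral)
qed

lemma sin_lb7: "x - x^3/6 + x^5/120 - \<bar>x\<bar>^7/5040 \<le> sin (x::real)"
proof -
  have e: "(\<Sum>m<7. sin_coeff m * x ^ m) = x - x^3/6 + x^5/120"
    by (simp add: lessThan_nat_numeral sin_coeff_def fact_numeral)
  have "(\<Sum>m<7. sin_coeff m * x ^ m) - sin x \<le> \<bar>x\<bar>^7 / fact 7"
    using sin_bound_gen[of x 7] by linarith
  then show ?thesis unfolding e by (simp add: fact_numeral)
qed

lemma sin_lb5: "x - x^3/6 - \<bar>x\<bar>^5/120 \<le> sin (x::real)"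
proof -
  have e: "(\<Sum>m<5. sin_coeff m * x ^ m) = x - x^3/6"
    by (simp add: lessThan_nat_numeral sin_coeff_def fact_numeral)
  have "(\<Sum>m<5. sin_coeff m * x ^ m) - sin x \<le> \<bar>x\<bar>^5 / fact 5"
    using sin_bound_gen[of x 5] by linarith
  then show ?thesis unfolding e by (simp add: fact_numeral)
qed

lemma cos_lb8: "1 - x^2/2 + x^4/24 - x^6/720 - x^8/40320 \<le> cos (x::real)"
proof -
  have e: "(\<Sum>m<8. cos_coeff m * x ^ m) = 1 - x^2/2 + x^4/24 - x^6/720"
    by (simp add: lessThan_nat_numeral cos_coeff_def fact_numeral)
  have "(\<Sum>m<8. cos_coeff m * x ^ m) - cos x \<le> \<bar>x\<bar>^8 / fact 8"
    using cos_bound_gen[of x 8] by linarith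
  then show ?thesis unfolding e by (simp add: fact_numeral)
qed

lemma cos_ub6: "cos (x::real) \<le> 1 - x^2/2 + x^4/24 + x^6/720"
proof -
  have e: "(\<Sum>m<6. cos_coeff m * x ^ m) = 1 - x^2/2 + x^4/24"
    by (simp add: lessThan_nat_numeral cos_coeff_def fact_numeral)
  have "cos x - (\<Sum>m<6. cos_coeff m * x ^ m) \<le> \<bar>x\<bar>^6 / fact 6"
    using cos_bound_gen[of x 6] by linarith
  then show ?thesis unfolding e by (simp add: fact_numeral)
qed

lemma cos_lb4: "1 - x^2/2 - x^4/24 \<le> cos (x::real)"
proof -
  have e: "(\<Sum>m<4. cos_coeff m * x ^ m) = 1 - x^2/2"
    by (simp add: lessThan_nat_numeral cos_coeff_def fact_numeral)
  have "(\<Sum>m<4. cos_coeff m * x ^ m) - cos x \<le> \<bar>x\<bar>^4 / fact 4"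
    using cos_bound_gen[of x 4] by linarith
  then show ?thesis unfolding e by (simp add: fact_numeral)
qed

lemma cos_ub4: "cos (x::real) \<le> 1 - x^2/2 + x^4/24"
proof -
  have e: "(\<Sum>m<4. cos_coeff m * x ^ m) = 1 - x^2/2"
    by (simp add: lessThan_nat_numeral cos_coeff_def fact_numeral)
  have "cos x - (\<Sum>m<4. cos_coeff m * x ^ m) \<le> \<bar>x\<bar>^4 / fact 4"
    using cos_bound_gen[of x 4] by linarith
  then show ?thesis unfolding e by (simp add: fact_numeral)
qed

lemma pade1:
  fixes s :: real assumes "1 \<le> s" shows "s * (3 * s+1)/(s+3) \<le> s powr (3/2)"
proof -
  have s0: "0 < s" using assms by linarith
  have "(3 * s+1)^2 \<le> s * (s+3)^2"
  proof -
    have "s * (s+3)^2 - (3 * s+1)^2 = (s-1)^3" by (simp add: algebra_simps power2_eq_square power3_eq_cube)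
    moreover have "(s-1)^3 \<ge> 0" using assms by simp
    ultimately show ?thesis by linarith
  qed
  then have "((3 * s+1)/(s+3))^2 \<le> s" using s0 by (simp add: power_divide pos_divide_le_eq)
  then have "(3 * s+1)/(s+3) \<le> sqrt s" by (rule real_le_rsqrt)
  then have "s * ((3 * s+1)/(s+3)) \<le> s * sqrt s" using s0 by (intro mult_left_mono) auto
  moreover have "s powr (3/2) = s * sqrt s"
  proof -
    have "s powr (3/2) = s powr (1 + 1/2)" by simp
    also have "\<dots> = s powr 1 * s powr (1/2)" by (rule powr_add)
    also have "\<dots> = s * sqrt s" using s0 by (simp add: powr_half_sqrt)
    finally show ?thesis .
  qed
  ultimately show ?thesis by simp
qed

lemma pade2:
  fixes t :: real assumes t0: "0 < t" and t1: "t \<le> 1" shows "t * (3 * t+5)/(5 * t+3) \<le> t powr (3/4)"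
proof -
  define v where "v = (5 * t+3)/(3 * t+5)"
  have v0: "0 < v" using t0 by (simp add: v_def)
  have "t * (3 * t+5)^4 \<le> (5 * t+3)^4"
  proof -
    have "(5 * t+3)^4 - t * (3 * t+5)^4 = (1-t)^3 * (81+158 * t+81 * t^2)"
      by (simp add: algebra_simps eval_nat_numeral)
    moreover have "(1-t)^3 * (81+158 * t+81 * t^2) \<ge> 0" using t0 t1 by simp
    ultimately show ?thesis by linarith
  qed
  then have "t \<le> v^4" using t0 by (simp add: v_def power_divide pos_le_divide_eq)
  then have "t powr (1/4) \<le> (v^4) powr (1/4)" using t0 by (intro powr_mono2) auto
  also have "(v^4) powr (1/4) = v"
  proof -
    have a: "v powr 4 = v^4" using v0 by simp
    have "(v powr 4) powr (1/4) = v" using v0 by (simp only: powr_powr) simp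
    then show ?thesis using a by simp
  qed
  finally have h: "t powr (1/4) \<le> v" .
  have tp: "0 < t powr (1/4)" using t0 by simp
  have "t powr (3/4) * t powr (1/4) = t" using t0 by (simp add: powr_add[symmetric])
  then have e: "t powr (3/4) = t / t powr (1/4)" using tp by (simp add: eq_divide_eq)
  have "t / v \<le> t / t powr (1/4)" using h tp v0 t0 by (intro divide_left_mono) auto
  moreover have "t / v = t * (3 * t+5)/(5 * t+3)" by (simp add: v_def)
  ultimately show ?thesis using e by simp
qed

lemma f1_mono:
  fixes a b :: real assumes "0 < a" "a \<le> b" shows "a * (3 * a+1)/(a+3) \<le> b * (3 * b+1)/(b+3)"
proof -
  have "b * (3 * b+1) * (a+3) - a * (3 * a+1) * (b+3) = (b-a) * (3 * a * b+9 * (a+b)+3)" by (simp add: algebra_simps)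
  moreover have "(b-a) * (3 * a * b+9 * (a+b)+3) \<ge> 0" using assms by (intro mult_nonneg_nonneg) auto
  ultimately have "a * (3 * a+1) * (b+3) \<le> b * (3 * b+1) * (a+3)" by linarith
  moreover have "0 < a+3" "0 < b+3" using assms by auto
  ultimately show ?thesis by (simp add: divide_simps)
qed

lemma f2_mono:
  fixes a b :: real assumes "0 < a" "a \<le> b" shows "a * (3 * a+5)/(5 * a+3) \<le> b * (3 * b+5)/(5 * b+3)"
proof -
  have "b * (3 * b+5) * (5 * a+3) - a * (3 * a+5) * (5 * b+3) = (b-a) * (15 * a * b+9 * (a+b)+15)" by (simp add: algebra_simps)
  moreover have "(b-a) * (15 * a * b+9 * (a+b)+15) \<ge> 0" using assms by (intro mult_nonneg_nonneg) auto
  ultimately have "a * (3 * a+5) * (5 * b+3) \<le> b * (3 * b+5) * (5 * a+3)" by linarith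
  moreover have "0 < 5 * a+3" "0 < 5 * b+3" using assms by auto
  ultimately show ?thesis by (simp add: divide_simps)
qed

lemma Q_pos:
  fixes z :: real assumes z0: "0 \<le> z" and z1: "z \<le> 49/25"
  shows "0 < (2/5) - (113/420) * z + (311/6300) * z^2 - (1387/302400) * z^3 + (9869/42336000) * z^4 - (487/84672000) * z^5 - (19/6096384000) * z^6 + (5963/1536288768000) * z^7 - (787/9217732608000) * z^8 + (1/2257403904000) * z^9 + (47/2654706991104000) * z^10"
proof -
  have q2: "(2/5) - (113/420) * z + (311/6300) * z^2 \<ge> (2/5) - (113/420) * (49/25) + (311/6300) * (49/25)^2"
  proof -
    have "(2/5) - (113/420) * z + (311/6300) * z^2 - ((2/5) - (113/420) * (49/25) + (311/6300) * (49/25)^2) = (49/25 - z) * (113/420 - 311/6300 * (z+49/25))"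
      by (simp add: divide_simps) algebra
    moreover have "(49/25 - z) * (113/420 - 311/6300 * (z+49/25)) \<ge> 0" using z0 z1 by (intro mult_nonneg_nonneg) auto
    ultimately show ?thesis by linarith
  qed
  have p3: "z^3 \<le> 117649/15625" using power_mono[OF z1, of 3] z0 by (simp add: power_divide)
  have p5: "z^5 \<le> 282475249/9765625" using power_mono[OF z1, of 5] z0 by (simp add: power_divide)
  have p6: "z^6 \<le> 13841287201/244140625" using power_mono[OF z1, of 6] z0 by (simp add: power_divide)
  have p8: "z^8 \<le> 33232930569601/152587890625" using power_mono[OF z1, of 8] z0 by (simp add: power_divide)
  have n4: "0 \<le> z^4" using z0 by simp
  have n7: "0 \<le> z^7" using z0 by simp
  have n9: "0 \<le> z^9" using z0 by simp
  have n10: "0 \<le> z^10" using z0 by simp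
  have num: "(2/5) - (113/420) * (49/25) + (311/6300) * (49/25::real)^2 = 8762/140625" by (simp add: power2_eq_square)
  have q2': "(2/5) - (113/420) * z + (311/6300) * z^2 \<ge> 8762/140625" using q2 num by linarith
  show ?thesis using q2' p3 p5 p6 p8 n4 n7 n9 n10 by linarith
qed

lemma M_id:
  fixes z :: real
  shows "(3+(1 - z/6 + z^2/120 - z^3/5040 + z^4/362880)) * (5 * (1 - z/2 + z^2/24 - z^3/720 - z^4/40320)+3 * (1 - z/6 + z^2/120 - z^3/5040 + z^4/362880)) + (1 - z/2 + z^2/24 - z^3/720 - z^4/40320) * (3 * (1 - z/2 + z^2/24 - z^3/720 - z^4/40320)+5 * (1 - z/6 + z^2/120 - z^3/5040 + z^4/362880)) * (1+3 * (1 - z/6 + z^2/120 - z^3/5040 + z^4/362880)) - 2 * (1 - z/6 + z^2/120 - z^3/5040 + z^4/362880) * (1+3 * (1 - z/6 + z^2/120 - z^3/5040 + z^4/362880)) * (5 * (1 - z/2 + z^2/24 - z^3/720 - z^4/40320)+3 * (1 - z/6 + z^2/120 - z^3/5040 + z^4/362880))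
   = z^2 * ((2/5) - (113/420) * z + (311/6300) * z^2 - (1387/302400) * z^3 + (9869/42336000) * z^4 - (487/84672000) * z^5 - (19/6096384000) * z^6 + (5963/1536288768000) * z^7 - (787/9217732608000) * z^8 + (1/2257403904000) * z^9 + (47/2654706991104000) * z^10)"
  by (simp add: divide_simps) algebra

lemma combine:
  fixes u c :: real assumes u0: "0 < u" and c0: "0 < c"
    and M: "0 < (3+u) * (5 * c+3 * u) + c * (3 * c+5 * u) * (1+3 * u) - 2 * u * (1+3 * u) * (5 * c+3 * u)"
  shows "(1/u) * (3 * (1/u)+1)/((1/u)+3) + (c/u) * (3 * (c/u)+5)/(5 * (c/u)+3) > 2"
proof -
  have h1: "1+3 * u \<noteq> 0" "u \<noteq> 0" "5 * c+3 * u \<noteq> 0" using u0 c0 by auto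
  have e1: "(1/u) * (3 * (1/u)+1)/((1/u)+3) = (3+u) * (5 * c+3 * u)/(u * (1+3 * u) * (5 * c+3 * u))" using h1 by (simp add: divide_simps)
  have e2: "(c/u) * (3 * (c/u)+5)/(5 * (c/u)+3) = c * (3 * c+5 * u) * (1+3 * u)/(u * (1+3 * u) * (5 * c+3 * u))" using h1 by (simp add: divide_simps)
  have d: "0 < u * (1+3 * u) * (5 * c+3 * u)" using u0 c0 by simp
  have "2 * (u * (1+3 * u) * (5 * c+3 * u)) / (u * (1+3 * u) * (5 * c+3 * u)) < ((3+u) * (5 * c+3 * u) + c * (3 * c+5 * u) * (1+3 * u)) / (u * (1+3 * u) * (5 * c+3 * u))"
    using M d by (intro divide_strict_right_mono) auto
  moreover have "2 * (u * (1+3 * u) * (5 * c+3 * u)) / (u * (1+3 * u) * (5 * c+3 * u)) = 2"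
    by (rule nonzero_mult_div_cancel_right) (use d in auto)
  ultimately show ?thesis unfolding e1 e2 by (simp add: add_divide_distrib)
qed
lemma left_ineq:
  fixes x :: real assumes x0: "0 < x" and x1: "x \<le> 7/5"
  shows "(x / sin x) powr (3/2) + (x * cos x / sin x) powr (3/4) > 2"
proof -
  have pi1: "7/5 < pi/2" using pi_approx by simp
  have sx: "0 < sin x" using x0 x1 pi1 by (intro sin_gt_zero) auto
  have cx: "0 < cos x" using x0 x1 pi1 by (intro cos_gt_zero_pi) auto
  define z where "z = x^2"
  have z0: "0 < z" using x0 by (simp add: z_def)
  have z1: "z \<le> 49/25" using power_mono[OF x1, of 2] x0 by (simp add: z_def power_divide)
  define u where "u = 1 - z/6 + z^2/120 - z^3/5040 + z^4/362880"
  define c where "c = 1 - z/2 + z^2/24 - z^3/720 - z^4/40320"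
  have su: "sin x \<le> x * u"
  proof -
    have "sin x \<le> x - x^3/6 + x^5/120 - x^7/5040 + \<bar>x\<bar>^9/362880" by (rule sin_ub9)
    also have "\<dots> = x * u" using x0 unfolding u_def z_def by (simp add: divide_simps) algebra
    finally show ?thesis .
  qed
  have cl: "c \<le> cos x"
  proof -
    have "c = 1 - x^2/2 + x^4/24 - x^6/720 - x^8/40320" unfolding c_def z_def by (simp add: divide_simps)
    then show ?thesis using cos_lb8[of x] by simp
  qed
  have zz2: "z^2 \<le> 49/25 * z" using z0 z1 by (simp add: power2_eq_square mult_right_mono)
  have zz3: "z^3 \<le> 117649/15625" using power_mono[OF z1, of 3] z0 by (simp add: power_divide)
  have zz4: "z^4 \<le> 5764801/390625" using power_mono[OF z1, of 4] z0 by (simp add: power_divide)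
  have zz4': "z^4 \<le> 117649/15625 * z"
  proof -
    have "z^4 = z^3 * z" by (simp add: eval_nat_numeral)
    also have "\<dots> \<le> 117649/15625 * z" using zz3 z0 by (intro mult_right_mono) auto
    finally show ?thesis .
  qed
  have nz: "0 \<le> z^2" "0 \<le> z^3" "0 \<le> z^4" using z0 by simp_all
  have u_pos: "0 < u" using zz3 nz z1 unfolding u_def by linarith
  have u_lt1: "u < 1" using zz2 zz4' z0 nz unfolding u_def by linarith
  have c_pos: "0 < c" using zz3 zz4 nz z1 unfolding c_def by linarith
  define s where "s = x / sin x"
  define t where "t = x * cos x / sin x"
  have s_ge: "1/u \<le> s"
  proof -
    have "x / (x * u) \<le> x / sin x" using su sx x0 by (intro divide_left_mono) auto
    then show ?thesis using x0 by (simp add: s_def)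
  qed
  have s1: "1 < s" using s_ge u_pos u_lt1 by (smt (verit) less_divide_eq_1_pos)
  have t_ge: "c/u \<le> t"
  proof -
    have "x * c / (x * u) \<le> x * cos x / sin x"
      using cl sx x0 cx su by (intro frac_le) (auto intro: mult_left_mono)
    then show ?thesis using x0 by (simp add: t_def)
  qed
  have t0: "0 < t" using x0 cx sx by (simp add: t_def)
  show ?thesis
  proof (cases "1 \<le> t")
    case True
    have "1 powr (3/2) < s powr (3/2)" using s1 by (intro powr_less_mono2) auto
    then have a: "1 < s powr (3/2)" by simp
    have b: "1 \<le> t powr (3/4)" using True by (intro ge_one_powr_ge_zero) auto
    show ?thesis using a b unfolding s_def t_def by linarith
  next
    case False
    have A: "(1/u) * (3 * (1/u)+1)/((1/u)+3) \<le> s powr (3/2)"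
      using f1_mono[of "1/u" s] pade1[of s] s_ge s1 u_pos by auto
    have B: "(c/u) * (3 * (c/u)+5)/(5 * (c/u)+3) \<le> t powr (3/4)"
      using f2_mono[of "c/u" t] pade2[of t] t_ge t0 False u_pos c_pos by auto
    have M: "0 < (3+u) * (5 * c+3 * u) + c * (3 * c+5 * u) * (1+3 * u) - 2 * u * (1+3 * u) * (5 * c+3 * u)"
      unfolding u_def c_def M_id using Q_pos[of z] z0 z1 by simp
    have C: "(1/u) * (3 * (1/u)+1)/((1/u)+3) + (c/u) * (3 * (c/u)+5)/(5 * (c/u)+3) > 2"
      by (rule combine[OF u_pos c_pos M])
    show ?thesis using A B C unfolding s_def t_def by linarith
  qed
qed

lemma R_pos:
  fixes z :: real assumes z0: "0 \<le> z" and z1: "z \<le> 49/25"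
  shows "0 < (1/15) - (113/7560) * z + (37/33600) * z^2 - (37/604800) * z^3 + (199/84672000) * z^4 - (31/508032000) * z^5 + (1/1016064000) * z^6 - (1/128024064000) * z^7"
proof -
  have p3: "z^3 \<le> 117649/15625" using power_mono[OF z1, of 3] z0 by (simp add: power_divide)
  have p5: "z^5 \<le> 282475249/9765625" using power_mono[OF z1, of 5] z0 by (simp add: power_divide)
  have p7: "z^7 \<le> 678223072849/6103515625" using power_mono[OF z1, of 7] z0 by (simp add: power_divide)
  have n2: "0 \<le> z^2" using z0 by simp
  have n4: "0 \<le> z^4" using z0 by simp
  have n6: "0 \<le> z^6" using z0 by simp
  show ?thesis using p3 p5 p7 n2 n4 n6 z1 z0 by linarith
qed

lemma W_id:
  fixes z :: real
  shows "(1 - z/6 + z^2/120 - z^3/5040)^3 - (1 - z/2 + z^2/24 + z^3/720) = z^2 * ((1/15) - (113/7560) * z + (37/33600) * z^2 - (37/604800) * z^3 + (199/84672000) * z^4 - (31/508032000) * z^5 + (1/1016064000) * z^6 - (1/128024064000) * z^7)"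
  by (simp add: divide_simps) algebra

lemma W_ineq:
  fixes x :: real assumes x0: "0 < x" and x1: "x < pi/2"
  shows "x^3 * cos x < (sin x)^3"
proof (cases "x \<le> 7/5")
  case True
  define z where "z = x^2"
  have z0: "0 < z" using x0 by (simp add: z_def)
  have z1: "z \<le> 49/25" using power_mono[OF True, of 2] x0 by (simp add: z_def power_divide)
  define v where "v = 1 - z/6 + z^2/120 - z^3/5040"
  define w where "w = 1 - z/2 + z^2/24 + z^3/720"
  have sv: "x * v \<le> sin x"
  proof -
    have "x * v = x - x^3/6 + x^5/120 - \<bar>x\<bar>^7/5040" using x0 unfolding v_def z_def by (simp add: divide_simps) algebra
    then show ?thesis using sin_lb7[of x] by simp
  qed
  have cw: "cos x \<le> w"
  proof -
    have "w = 1 - x^2/2 + x^4/24 + x^6/720" unfolding w_def z_def by (simp add: divide_simps)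
    then show ?thesis using cos_ub6[of x] by simp
  qed
  have zz3: "z^3 \<le> 117649/15625" using power_mono[OF z1, of 3] z0 by (simp add: power_divide)
  have v0: "0 < v" using zz3 z1 z0 zero_le_power2[of z] unfolding v_def by linarith
  have vw: "w < v^3"
    using W_id[of z] R_pos[of z] z0 z1 unfolding v_def w_def by (smt (verit) zero_less_power mult_pos_pos)
  have "x^3 * cos x \<le> x^3 * w" using cw x0 by (intro mult_left_mono) auto
  also have "\<dots> < x^3 * v^3" using vw x0 by (intro mult_strict_left_mono) auto
  also have "\<dots> = (x * v)^3" by (simp add: power_mult_distrib)
  also have "\<dots> \<le> (sin x)^3" using sv x0 v0 by (intro power_mono) auto
  finally show ?thesis .
next
  case False
  have pi2: "pi/2 \<le> 15708/10000" using pi_approx by simp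
  have c1: "cos x \<le> cos (7/5)" using False x1 pi2 by (intro cos_monotone_0_pi_le) auto
  have c2: "cos (7/5::real) \<le> 1/5"
    using cos_ub6[of "7/5"] by (simp add: power_divide)
  have s1: "sin (7/5) \<le> sin x" using False x1 by (intro sin_monotone_2pi_le) auto
  have s2: "49/50 \<le> sin (7/5::real)"
    using sin_lb7[of "7/5"] by (simp add: power_divide)
  have x3: "x^3 \<le> 4"
  proof -
    have "x^3 \<le> (15708/10000)^3" using x0 x1 pi2 by (intro power_mono) auto
    then show ?thesis by (simp add: power_divide)
  qed
  have cx: "0 < cos x" using x0 x1 by (intro cos_gt_zero_pi) auto
  have "x^3 * cos x \<le> 4 * (1/5)" using x3 c1 c2 cx by (intro mult_mono) auto
  also have "\<dots> < (49/50)^3" by (simp add: power_divide)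
  also have "\<dots> \<le> (sin x)^3" using s1 s2 by (intro power_mono) auto
  finally show ?thesis .
qed

lemma bern_convex:
  fixes q k :: real assumes q0: "0 < q" and k1: "1 \<le> k"
  shows "1 + k * (q - 1) \<le> q powr k"
proof -
  have "(q powr k) powr (1/k) * 1 powr (1 - 1/k) \<le> (1/k) * (q powr k) + (1 - 1/k) * 1"
    using k1 q0 by (intro Youngs_inequality_0) auto
  moreover have "(q powr k) powr (1/k) = q" using k1 q0 by (simp add: powr_powr)
  ultimately have "q \<le> (1/k) * (q powr k) + (1 - 1/k)" by simp
  then have "k * q \<le> k * ((1/k) * (q powr k) + (1 - 1/k))" using k1 by (intro mult_left_mono) auto
  also have "\<dots> = q powr k + k - 1" using k1 by (simp add: algebra_simps)
  finally show ?thesis by (simp add: algebra_simps)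
qed

lemma extend:
  fixes s t p1 p :: real
  assumes p1: "0 < p1" "p1 \<le> p" and st: "0 < s" "0 < t"
    and h: "s powr (2 * p1) + t powr p1 > 2"
  shows "s powr (2 * p) + t powr p > 2"
proof -
  define l where "l = p1 / p"
  have l0: "0 < l" "l \<le> 1" using p1 by (auto simp: l_def)
  have e1: "s powr (2 * p1) = (s powr (2 * p)) powr l" using p1 by (simp add: powr_powr l_def)
  have e2: "t powr p1 = (t powr p) powr l" using p1 by (simp add: powr_powr l_def)
  have y1: "(s powr (2 * p)) powr l * 1 powr (1 - l) \<le> l * (s powr (2 * p)) + (1 - l) * 1"
    using l0 st by (intro Youngs_inequality_0) auto
  have y2: "(t powr p) powr l * 1 powr (1 - l) \<le> l * (t powr p) + (1 - l) * 1"
    using l0 st by (intro Youngs_inequality_0) auto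
  have "2 < l * (s powr (2 * p) + t powr p) + 2 * (1 - l)"
    using h y1 y2 unfolding e1 e2 by (simp add: algebra_simps)
  then have "l * 2 < l * (s powr (2 * p) + t powr p)" by (simp add: algebra_simps)
  then show ?thesis using l0 by simp
qed
lemma piece:
  fixes x y e sy cy a b :: real
  assumes y0: "0 < y" and ya: "a \<le> y" and yb: "y \<le> b"
    and x7: "7/5 \<le> x"
    and e0: "0 \<le> e" and e1: "e \<le> y * (6367/10000 - y/2 + y^3/24)"
    and sy: "y * (1 - y^2/6 - y^4/120) \<le> sy"
    and cy: "1 - y^2/2 - y^4/24 \<le> cy"
    and nb1: "0 \<le> 1 - b^2/6 - b^4/120" and nb2: "0 \<le> 1 - b^2/2 - b^4/24" and nb3: "0 \<le> 6367/10000 - b/2"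
    and num: "(16/5)^5 * b * (6367/10000 - a/2 + b^3/24)^5 < (7/5)^4 * (1 - b^2/6 - b^4/120)^4 * (1 - b^2/2 - b^4/24)"
  shows "(16/5)^5 * e^5 < x^4 * sy^4 * cy"
proof -
  define sb where "sb = 1 - b^2/6 - b^4/120"
  define gb where "gb = 1 - b^2/2 - b^4/24"
  define rb where "rb = 6367/10000 - a/2 + b^3/24"
  have y2: "y^2 \<le> b^2" using y0 yb by (intro power_mono) auto
  have y4: "y^4 \<le> b^4" using y0 yb by (intro power_mono) auto
  have y3: "y^3 \<le> b^3" using y0 yb by (intro power_mono) auto
  have y30: "0 \<le> y^3" using y0 by simp
  have r1: "6367/10000 - y/2 + y^3/24 \<le> rb" using ya y3 unfolding rb_def by linarith
  have r0: "0 \<le> 6367/10000 - y/2 + y^3/24" using yb nb3 y30 by linarith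
  have rb0: "0 \<le> rb" using r0 r1 by linarith
  have e2: "e \<le> y * rb" using e1 mult_left_mono[OF r1, of y] y0 by linarith
  have e5: "e^5 \<le> (y * rb)^5" using e0 e2 by (intro power_mono) auto
  have sb1: "sb \<le> 1 - y^2/6 - y^4/120" using y2 y4 unfolding sb_def by linarith
  have sy2: "y * sb \<le> sy" using sy mult_left_mono[OF sb1, of y] y0 by linarith
  have sb0: "0 \<le> sb" using nb1 sb_def by simp
  have sy4: "(y * sb)^4 \<le> sy^4" using sy2 sb0 y0 by (intro power_mono) auto
  have gb1: "gb \<le> cy" using y2 y4 cy unfolding gb_def by linarith
  have gb0: "0 \<le> gb" using nb2 gb_def by simp
  have x4: "(7/5)^4 \<le> x^4" using x7 by (intro power_mono) auto
  have L: "(7/5)^4 * (y * sb)^4 * gb \<le> x^4 * sy^4 * cy"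
    using x4 sy4 gb1 gb0 sb0 y0 by (intro mult_mono) auto
  have num': "(16/5)^5 * b * rb^5 < (7/5)^4 * sb^4 * gb" using num unfolding sb_def gb_def rb_def .
  have "(16/5)^5 * e^5 \<le> (16/5)^5 * (y * rb)^5" using e5 by simp
  also have "\<dots> = y^4 * ((16/5)^5 * y * rb^5)" by (simp add: power_mult_distrib eval_nat_numeral)
  also have "\<dots> \<le> y^4 * ((16/5)^5 * b * rb^5)"
    using yb rb0 y0 by (intro mult_left_mono) (auto intro: mult_right_mono)
  also have "\<dots> < y^4 * ((7/5)^4 * sb^4 * gb)" using num' y0 by (intro mult_strict_left_mono) auto
  also have "\<dots> = (7/5)^4 * (y * sb)^4 * gb" by (simp add: power_mult_distrib)
  also have "\<dots> \<le> x^4 * sy^4 * cy" by (rule L)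
  finally show ?thesis .
qed

lemma right_poly:
  fixes x y e sy cy :: real
  assumes y0: "0 < y" and yb: "y \<le> 171/1000"
    and x7: "7/5 \<le> x"
    and e0: "0 \<le> e" and e1: "e \<le> y * (6367/10000 - y/2 + y^3/24)"
    and sy: "y * (1 - y^2/6 - y^4/120) \<le> sy"
    and cy: "1 - y^2/2 - y^4/24 \<le> cy"
  shows "(16/5)^5 * e^5 < x^4 * sy^4 * cy"
proof -
  consider "y \<le> 21/200" | "21/200 \<le> y" "y \<le> 79/500" | "79/500 \<le> y" by linarith
  then show ?thesis
  proof cases
    case 1
    show ?thesis
      by (rule piece[of y 0 "21/200" x e sy cy]) (use assms 1 in \<open>simp_all add: power_divide\<close>)
  next
    case 2
    show ?thesis
      by (rule piece[of y "21/200" "79/500" x e sy cy]) (use assms 2 in \<open>simp_all add: power_divide\<close>)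
  next
    case 3
    show ?thesis
      by (rule piece[of y "79/500" "171/1000" x e sy cy]) (use assms 3 in \<open>simp_all add: power_divide\<close>)
  qed
qed

lemma p0_facts:
  shows "3/4 \<le> ln 2 / (2 * (ln pi - ln 2))" "ln 2 / (2 * (ln pi - ln 2)) \<le> 4/5"
    "(pi/2) powr (2 * (ln 2 / (2 * (ln pi - ln 2)))) = 2"
proof -
  define L where "L = ln (pi/2)"
  have Lpi: "ln pi - ln 2 = L" unfolding L_def by (simp add: ln_div)
  have pi2: "15707/10000 \<le> pi/2" "pi/2 \<le> 15708/10000" using pi_approx by simp_all
  have L0: "0 < L" unfolding L_def using pi2 by (intro ln_gt_zero) simp
  have A: "(pi/2)^3 \<le> 4"
  proof -
    have "(pi/2)^3 \<le> (15708/10000)^3" using pi2 by (intro power_mono) auto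
    then show ?thesis by (simp add: power_divide)
  qed
  have B: "32 \<le> (pi/2)^8"
  proof -
    have "(15707/10000::real)^8 \<le> (pi/2)^8" using pi2 by (intro power_mono) auto
    then show ?thesis by (simp add: power_divide)
  qed
  have lA: "3 * L \<le> 2 * ln 2"
  proof -
    have "ln ((pi/2)^3) \<le> ln 4" using A by (subst ln_le_cancel_iff) auto
    moreover have "ln ((pi/2)^3) = 3 * L" unfolding L_def by (simp add: ln_realpow)
    moreover have "ln (4::real) = 2 * ln 2"
      using ln_mult[of 2 2] by simp
    ultimately show ?thesis by simp
  qed
  have lB: "5 * ln 2 \<le> 8 * L"
  proof -
    have B': "(2::real)^5 \<le> (pi/2)^8" using B by simp
    have "ln ((2::real)^5) \<le> ln ((pi/2)^8)" using B' by (subst ln_le_cancel_iff) auto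
    moreover have "ln ((pi/2)^8) = 8 * L" unfolding L_def by (simp add: ln_realpow)
    moreover have "ln ((2::real)^5) = 5 * ln 2" by (subst ln_realpow) simp
    ultimately show ?thesis by simp
  qed
  show "3/4 \<le> ln 2 / (2 * (ln pi - ln 2))" unfolding Lpi using lA L0 by (simp add: le_divide_eq)
  show "ln 2 / (2 * (ln pi - ln 2)) \<le> 4/5" unfolding Lpi using lB L0 by (simp add: divide_le_eq)
  show "(pi/2) powr (2 * (ln 2 / (2 * (ln pi - ln 2)))) = 2" unfolding Lpi powr_def L_def
    using L0 L_def pi2 by simp
qed

lemma right_ineq:
  fixes x :: real
  assumes x7: "7/5 \<le> x" and xp: "x < pi/2"
  shows "(x / sin x) powr (2 * (ln 2 / (2 * (ln pi - ln 2)))) + (x * cos x / sin x) powr (ln 2 / (2 * (ln pi - ln 2))) > 2"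
proof -
  define p0 where "p0 = ln 2 / (2 * (ln pi - ln 2))"
  define k where "k = 2 * p0"
  have pf: "3/4 \<le> p0" "p0 \<le> 4/5" "(pi/2) powr k = 2" using p0_facts unfolding p0_def k_def by auto
  have k1: "1 \<le> k" "k \<le> 8/5" using pf unfolding k_def by auto
  have pi2: "15707/10000 \<le> pi/2" "pi/2 \<le> 15708/10000" using pi_approx by simp_all
  have pil: "2 \<le> 6367/10000 * pi" using pi_approx by simp
  define y where "y = pi/2 - x"
  have y0: "0 < y" using xp by (simp add: y_def)
  have yb: "y \<le> 171/1000" using pi2 x7 by (simp add: y_def)
  have xy: "x = pi/2 - y" by (simp add: y_def)
  have sxy: "sin x = cos y" unfolding y_def by (simp add: sin_cos_eq)
  have cxy: "cos x = sin y" unfolding y_def by (simp add: cos_sin_eq)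
  have cy0: "0 < cos y" using y0 yb pi2 by (intro cos_gt_zero_pi) auto
  have sy0: "0 < sin y" using y0 yb pi2 by (intro sin_gt_zero) auto
  have x0: "0 < x" using x7 by simp
  define s where "s = x / cos y"
  define t where "t = x * sin y / cos y"
  define q where "q = s / (pi/2)"
  have s0: "0 < s" using x0 cy0 by (simp add: s_def)
  have t0: "0 < t" using x0 cy0 sy0 by (simp add: t_def)
  have q0: "0 < q" using s0 by (simp add: q_def)
  have sq: "s = pi/2 * q" by (simp add: q_def)
  have sk: "s powr k = 2 * q powr k" unfolding sq powr_mult pf(3) by simp
  have t1: "t \<le> 1"
  proof -
    have "x * sin y \<le> (15708/10000) * (171/1000)"
      using xp pi2 sin_x_le_x[of y] y0 yb sy0 x0 by (intro mult_mono) auto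
    moreover have "1 - y^2/2 - y^4/24 \<le> cos y" by (rule cos_lb4)
    moreover have "y^2 \<le> (171/1000)^2" using y0 yb by (intro power_mono) auto
    moreover have "y^4 \<le> (171/1000)^4" using y0 yb by (intro power_mono) auto
    ultimately have "x * sin y \<le> cos y" by (simp add: power_divide)
    then show ?thesis using cy0 by (simp add: t_def divide_le_eq)
  qed
  have goal_eq: "(x / sin x) powr (2 * p0) + (x * cos x / sin x) powr p0 = s powr k + t powr p0"
    unfolding sxy cxy s_def t_def k_def by simp
  have p0pos: "0 < p0" using pf by simp
  show ?thesis
  proof (cases "1 \<le> q")
    case True
    have "1 \<le> q powr k" using True k1 by (intro ge_one_powr_ge_zero) auto
    moreover have "0 < t powr p0" using t0 by simp
    ultimately show ?thesis using goal_eq sk unfolding p0_def by linarith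
  next
    case False
    have bern: "1 + k * (q - 1) \<le> q powr k" using bern_convex[OF q0 k1(1)] .
    have bern2: "8/5 * (q - 1) \<le> k * (q - 1)" using False k1 by (intro mult_right_mono_neg) auto
    have tp: "t powr (4/5) \<le> t powr p0" using pf t0 t1 by (intro powr_mono') auto
    define e where "e = cos y - 1 + 2 * y / pi"
    have qe: "1 - q = e / cos y"
      unfolding q_def s_def e_def xy using cy0 by (simp add: field_simps)
    have e0: "0 < e" using qe False cy0 by (smt (verit) divide_nonpos_pos)
    have e1: "e \<le> y * (6367/10000 - y/2 + y^3/24)"
    proof -
      have "cos y \<le> 1 - y^2/2 + y^4/24" by (rule cos_ub4)
      moreover have "2 * y / pi \<le> 6367/10000 * y"
        using pil y0 by (simp add: divide_le_eq mult.commute mult.left_commute)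
      moreover have "y * (6367/10000 - y/2 + y^3/24) = 6367/10000 * y - y^2/2 + y^4/24"
        by (simp add: algebra_simps power2_eq_square eval_nat_numeral)
      ultimately show ?thesis unfolding e_def by linarith
    qed
    have sy: "y * (1 - y^2/6 - y^4/120) \<le> sin y"
    proof -
      have "y * (1 - y^2/6 - y^4/120) = y - y^3/6 - \<bar>y\<bar>^5/120" using y0 by (simp add: algebra_simps eval_nat_numeral)
      then show ?thesis using sin_lb5[of y] by simp
    qed
    have P: "(16/5)^5 * e^5 < x^4 * (sin y)^4 * cos y"
      by (rule right_poly[OF y0 yb x7 _ e1 sy cos_lb4]) (use e0 in simp)
    define a where "a = 16/5 * (1 - q)"
    have a0: "0 < a" using False by (simp add: a_def)
    have a5: "a^5 < t^4"
    proof -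
      have "a^5 = (16/5)^5 * e^5 / (cos y)^5" unfolding a_def qe by (simp add: power_divide power_mult_distrib)
      also have "\<dots> < x^4 * (sin y)^4 * cos y / (cos y)^5" using P cy0 by (intro divide_strict_right_mono) auto
      also have "\<dots> = t^4" unfolding t_def using cy0 by (simp add: power_divide power_mult_distrib eval_nat_numeral)
      finally show ?thesis .
    qed
    have "(a^5) powr (1/5) < (t^4) powr (1/5)" using a5 a0 by (intro powr_less_mono2) auto
    moreover have "(a^5) powr (1/5) = a"
    proof -
      have "a powr 5 = a^5" using a0 by simp
      moreover have "(a powr 5) powr (1/5) = a" using a0 by (simp only: powr_powr) simp
      ultimately show ?thesis by simp
    qed
    moreover have "(t^4) powr (1/5) = t powr (4/5)"
    proof -
      have "t powr 4 = t^4" using t0 by simp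
      moreover have "(t powr 4) powr (1/5) = t powr (4/5)" by (simp add: powr_powr)
      ultimately show ?thesis by simp
    qed
    ultimately have ta: "a < t powr (4/5)" by simp
    have c1: "2 + 16/5 * (q - 1) \<le> s powr k" using sk bern bern2 by linarith
    have c2: "16/5 * (1 - q) < t powr p0" using tp ta unfolding a_def by linarith
    have "2 < s powr k + t powr p0" using c1 c2 by (simp add: field_simps)
    then show ?thesis using goal_eq unfolding p0_def by linarith
  qed
qed
lemma inv_sum:
  fixes A B :: real assumes A0: "0 < A" and B0: "0 < B"
  shows "A + B < inverse A + inverse B \<longleftrightarrow> A * B < 1"
proof -
  have AB: "0 < A * B" "0 < A + B" using A0 B0 by auto
  have e: "inverse A + inverse B = (A + B) / (A * B)" using A0 B0 by (simp add: field_simps)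
  have "A + B < (A + B) / (A * B) \<longleftrightarrow> (A + B) * (A * B) < A + B" using AB by (simp add: less_divide_eq)
  also have "\<dots> \<longleftrightarrow> (A + B) * (A * B) < (A + B) * 1" by simp
  also have "\<dots> \<longleftrightarrow> A * B < 1" using AB(2) by (rule mult_less_cancel_left_pos)
  finally show ?thesis using e by simp
qed

lemma prod_lemma:
  fixes x p :: real assumes x0: "0 < x" and x1: "x < pi/2"
  shows "(x / sin x) powr (2 * p) * (x / tan x) powr p = (x^3 * cos x / (sin x)^3) powr p"
    and "0 < x^3 * cos x / (sin x)^3" and "x^3 * cos x / (sin x)^3 < 1"
proof -
  have sx: "0 < sin x" using x0 x1 by (intro sin_gt_zero) auto
  have cx: "0 < cos x" using x0 x1 by (intro cos_gt_zero_pi) auto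
  have tt: "x / tan x = x * cos x / sin x" by (simp add: tan_def)
  have s0: "0 \<le> x / sin x" using x0 sx by simp
  have e1: "(x / sin x) powr (2 * p) = ((x / sin x)^2) powr p"
  proof -
    have "((x / sin x)^2) powr p = ((x / sin x) powr 2) powr p" using s0 by simp
    also have "\<dots> = (x / sin x) powr (2 * p)" by (simp only: powr_powr)
    finally show ?thesis by simp
  qed
  have e2: "(x / sin x)^2 * (x * cos x / sin x) = x^3 * cos x / (sin x)^3"
    by (simp add: power2_eq_square power3_eq_cube)
  show "(x / sin x) powr (2 * p) * (x / tan x) powr p = (x^3 * cos x / (sin x)^3) powr p"
    unfolding e1 tt e2[symmetric] by (rule powr_mult[symmetric])
  show "0 < x^3 * cos x / (sin x)^3" using x0 sx cx by simp
  show "x^3 * cos x / (sin x)^3 < 1" using W_ineq[OF x0 x1] sx by simp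
qed

lemma P1_iff:
  fixes x p :: real assumes x0: "0 < x" and x1: "x < pi/2"
  shows "((sin x / x) powr (2 * p) + (tan x / x) powr p > (x / sin x) powr (2 * p) + (x / tan x) powr p)
     \<longleftrightarrow> (x^3 * cos x / (sin x)^3) powr p < 1"
proof -
  have sx: "0 < sin x" using x0 x1 by (intro sin_gt_zero) auto
  have cx: "0 < cos x" using x0 x1 by (intro cos_gt_zero_pi) auto
  have tt: "x / tan x = x * cos x / sin x" by (simp add: tan_def)
  have t0: "0 < x / tan x" unfolding tt using x0 sx cx by simp
  have s0: "0 < x / sin x" using x0 sx by simp
  have i1: "sin x / x = inverse (x / sin x)" by simp
  have i2: "tan x / x = inverse (x / tan x)" by simp
  have A0: "0 < (x / sin x) powr (2 * p)" using s0 x0 sx by simp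
  have B0: "0 < (x / tan x) powr p" using t0 by (subst powr_gt_zero) auto
  show ?thesis unfolding i1 i2 inverse_powr inv_sum[OF A0 B0] prod_lemma(1)[OF x0 x1] ..
qed

theorem corollary4p10:
  fixes p :: real
  shows "(\<forall>x::real. 0 < x \<and> x < pi / 2 \<longrightarrow>
            (sin x / x) powr (2 * p) + (tan x / x) powr p
              > (x / sin x) powr (2 * p) + (x / tan x) powr p
          \<and> (x / sin x) powr (2 * p) + (x / tan x) powr p > 2)
         \<longleftrightarrow> p \<ge> ln 2 / (2 * (ln pi - ln 2))"
proof -
  define p0 where "p0 = ln 2 / (2 * (ln pi - ln 2))"
  have pf: "3/4 \<le> p0" "p0 \<le> 4/5" "(pi/2) powr (2 * p0) = 2" using p0_facts unfolding p0_def by auto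
  have pi2: "15707/10000 \<le> pi/2" "pi/2 \<le> 15708/10000" using pi_approx by simp_all
  have Lpos: "0 < ln pi - ln 2"
  proof -
    have "ln 2 < ln pi" using pi_approx by (subst ln_less_cancel_iff) auto
    then show ?thesis by simp
  qed
  have tt: "\<And>x::real. x / tan x = x * cos x / sin x" by (simp add: tan_def)
  show ?thesis unfolding p0_def[symmetric]
  proof
    assume H: "\<forall>x::real. 0 < x \<and> x < pi / 2 \<longrightarrow>
            (sin x / x) powr (2 * p) + (tan x / x) powr p
              > (x / sin x) powr (2 * p) + (x / tan x) powr p
          \<and> (x / sin x) powr (2 * p) + (x / tan x) powr p > 2"
    have ppos: "0 < p"
    proof (rule ccontr)
      assume np: "\<not> 0 < p"
      have x1: "0 < (1::real)" "1 < pi/2" using pi2 by auto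
      define b where "b = (1::real)^3 * cos 1 / (sin 1)^3"
      have b0: "0 < b" "b < 1" using prod_lemma(2,3)[OF x1] unfolding b_def by auto
      have "b powr (- p) \<le> 1" using np b0 by (intro powr_le1) auto
      moreover have "0 < b powr (- p)" using b0 by simp
      moreover have "b powr p = inverse (b powr (- p))" using powr_minus[of b "-p"] by simp
      ultimately have "1 \<le> b powr p" by (simp add: one_le_inverse)
      moreover have "b powr p < 1" using H x1 P1_iff[OF x1, of p] unfolding b_def by blast
      ultimately show False by simp
    qed
    have ev: "eventually (\<lambda>x. 2 \<le> (x / sin x) powr (2*p) + (x * cos x / sin x) powr p) (at_left (pi/2))"
    proof -
      have "eventually (\<lambda>x. x \<in> {0<..<pi/2}) (at_left (pi/2))" by (rule eventually_at_left_real) simp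
      then show ?thesis
      proof (rule eventually_mono)
        fix x assume "x \<in> {0<..<pi/2}"
        then have "0 < x" "x < pi/2" by auto
        with H have "2 < (x / sin x) powr (2*p) + (x / tan x) powr p" by blast
        then show "2 \<le> (x / sin x) powr (2*p) + (x * cos x / sin x) powr p" unfolding tt by simp
      qed
    qed
    have evnn: "eventually (\<lambda>x. 0 \<le> x * cos x / sin x) (at_left (pi/2))"
    proof -
      have "eventually (\<lambda>x. x \<in> {0<..<pi/2}) (at_left (pi/2))" by (rule eventually_at_left_real) simp
      then show ?thesis
      proof (rule eventually_mono)
        fix x assume "x \<in> {0<..<pi/2}"
        then have x0: "0 < x" and x1: "x < pi/2" by auto
        have "0 < sin x" using x0 x1 by (intro sin_gt_zero) auto
        moreover have "0 < cos x" using x0 x1 by (intro cos_gt_zero_pi) auto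
        ultimately show "0 \<le> x * cos x / sin x" using x0 by simp
      qed
    qed
    have l1: "((\<lambda>x. x / sin x) \<longlongrightarrow> pi/2) (at_left (pi/2))"
    proof -
      have "((\<lambda>x. x / sin x) \<longlongrightarrow> (pi/2) / sin (pi/2)) (at_left (pi/2))"
        by (intro tendsto_intros) auto
      then show ?thesis by simp
    qed
    have l2: "((\<lambda>x. x * cos x / sin x) \<longlongrightarrow> 0) (at_left (pi/2))"
    proof -
      have "((\<lambda>x. x * cos x / sin x) \<longlongrightarrow> (pi/2) * cos (pi/2) / sin (pi/2)) (at_left (pi/2))"
        by (intro tendsto_intros) auto
      then show ?thesis by simp
    qed
    have l1p: "((\<lambda>x. (x / sin x) powr (2*p)) \<longlongrightarrow> (pi/2) powr (2*p)) (at_left (pi/2))"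
      by (rule tendsto_powr[OF l1 tendsto_const]) simp
    have l2p: "((\<lambda>x. (x * cos x / sin x) powr p) \<longlongrightarrow> 0) (at_left (pi/2))"
      by (rule tendsto_zero_powrI[OF l2 tendsto_const evnn ppos])
    have "((\<lambda>x. (x / sin x) powr (2*p) + (x * cos x / sin x) powr p) \<longlongrightarrow> (pi/2) powr (2*p) + 0) (at_left (pi/2))"
      by (rule tendsto_add[OF l1p l2p])
    then have "2 \<le> (pi/2) powr (2*p) + 0" by (rule tendsto_lowerbound[OF _ ev]) simp
    then have "ln 2 \<le> ln ((pi/2) powr (2*p))" by (subst ln_le_cancel_iff) auto
    also have "\<dots> = 2 * p * (ln pi - ln 2)" by (simp add: ln_div)
    finally have "ln 2 \<le> p * (2 * (ln pi - ln 2))" by (simp add: algebra_simps)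
    then show "p0 \<le> p" unfolding p0_def using Lpos by (simp add: divide_le_eq)
  next
    assume hp: "p0 \<le> p"
    have pp: "0 < p" using pf hp by linarith
    show "\<forall>x::real. 0 < x \<and> x < pi / 2 \<longrightarrow>
            (sin x / x) powr (2 * p) + (tan x / x) powr p
              > (x / sin x) powr (2 * p) + (x / tan x) powr p
          \<and> (x / sin x) powr (2 * p) + (x / tan x) powr p > 2"
    proof (intro allI impI, elim conjE)
      fix x :: real assume x0: "0 < x" and x1: "x < pi/2"
      have sx: "0 < sin x" using x0 x1 by (intro sin_gt_zero) auto
      have cx: "0 < cos x" using x0 x1 by (intro cos_gt_zero_pi) auto
      have s0: "0 < x / sin x" using x0 sx by simp
      have t0: "0 < x * cos x / sin x" using x0 sx cx by simp
      have P2: "2 < (x / sin x) powr (2 * p) + (x * cos x / sin x) powr p"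
      proof (cases "x \<le> 7/5")
        case True
        show ?thesis
        proof (rule extend[of "3/4" p])
          show "0 < (3/4::real)" by simp
          show "3/4 \<le> p" using pf hp by simp
          show "0 < x / sin x" by (rule s0)
          show "0 < x * cos x / sin x" by (rule t0)
          show "2 < (x / sin x) powr (2 * (3/4)) + (x * cos x / sin x) powr (3/4)"
            using left_ineq[OF x0 True] by simp
        qed
      next
        case False
        show ?thesis
        proof (rule extend[of p0 p])
          show "0 < p0" using pf by simp
          show "p0 \<le> p" by (rule hp)
          show "0 < x / sin x" by (rule s0)
          show "0 < x * cos x / sin x" by (rule t0)
          show "2 < (x / sin x) powr (2 * p0) + (x * cos x / sin x) powr p0"
            using right_ineq[of x] False x1 unfolding p0_def by simp
        qed
      qed
      have P1: "(x^3 * cos x / (sin x)^3) powr p < 1"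
      proof -
        have "(x^3 * cos x / (sin x)^3) powr p < 1 powr p"
          using prod_lemma(2,3)[OF x0 x1] pp by (intro powr_less_mono2) auto
        then show ?thesis by simp
      qed
      show "(sin x / x) powr (2 * p) + (tan x / x) powr p
              > (x / sin x) powr (2 * p) + (x / tan x) powr p
          \<and> (x / sin x) powr (2 * p) + (x / tan x) powr p > 2"
        using P1 P1_iff[OF x0 x1, of p] P2 unfolding tt by simp
    qed
  qed
qed

end
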